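(* For every integer $n\ge1$, $$\frac{[(2n)!]^2}{(2n-1)!\,(2n+1)!}=\sum_{k=1}^n\binom{2n}{2k}\frac{2^{2k}B_{2k}}{2n-2k+1}.$$
   Context: Bernoulli numbers $B_n$ are defined by $\frac{t}{e^t-1}=\sum_{n\ge0}B_nt^n/n!$. *)

theory Defs
  imports "HOL-Analysis.Analysis" "HOL-Computational_Algebra.Formal_Power_Series"
begin

definition bernoulli :: "nat \<Rightarrow> real" where
  "bernoulli n = fact n * fps_nth (fps_X / (fps_exp 1 - 1)) n"

end

theory Submission imports Defs begin

lemma bE: "(fps_X / (fps_exp (1::real) - 1)) * (fps_exp 1 - 1) = fps_X"
proof -
  have ne: "fps_exp (1::real) - 1 \<noteq> 0"
  proof
    assume "fps_exp (1::real) - 1 = 0"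
    then have "fps_nth (fps_exp (1::real) - 1) 1 = 0" by simp
    then show False by simp
  qed
  have "subdegree (fps_exp (1::real) - 1) \<le> 1"
    by (rule subdegree_leI) simp
  then have "subdegree (fps_exp (1::real) - 1) \<le> subdegree (fps_X :: real fps)" by simp
  then show ?thesis using fps_times_divide_eq[OF ne] by blast
qed

lemma compose_lin:
  fixes c :: real
  shows "(fps_X / (fps_exp 1 - 1) oo (fps_const c * fps_X)) * (fps_exp c - 1) = fps_const c * fps_X"
proof -
  let ?b = "fps_X / (fps_exp (1::real) - 1)"
  let ?M = "fps_const c * fps_X"
  have M0: "fps_nth ?M 0 = 0" by simp
  have "(?b * (fps_exp 1 - 1)) oo ?M = fps_X oo ?M" by (simp add: bE)
  also have "\<dots> = ?M" using M0 by (rule fps_X_fps_compose_startby0)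
  finally have "(?b oo ?M) * ((fps_exp 1 - 1) oo ?M) = ?M"
    by (simp add: fps_compose_mult_distrib[OF M0])
  moreover have "(fps_exp 1 - 1) oo ?M = fps_exp c - 1"
    by (simp add: fps_compose_sub_distrib)
  ultimately show ?thesis by simp
qed

lemma exp_inv: "fps_exp (-1::real) * fps_exp 1 = 1"
  by (simp add: fps_exp_add_mult[symmetric])

lemma refl_b: "fps_X / (fps_exp (1::real) - 1) oo (fps_const (-1) * fps_X) = fps_X / (fps_exp 1 - 1) + fps_X"
proof -
  let ?b = "fps_X / (fps_exp (1::real) - 1)"
  let ?R = "?b oo (fps_const (-1) * fps_X)"
  have h: "?R * (fps_exp (-1) - 1) = fps_const (-1) * fps_X" by (rule compose_lin)
  have "?R * (1 - fps_exp 1) = ?R * (fps_exp (-1) - 1) * fps_exp 1"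
    using exp_inv by (simp add: algebra_simps)
  also have "\<dots> = - fps_X * fps_exp 1" using h by (simp add: fps_const_neg[symmetric] del: fps_const_neg)
  finally have 1: "?R * (1 - fps_exp 1) = - fps_X * fps_exp 1" .
  have "(?b + fps_X) * (1 - fps_exp 1) = - (?b * (fps_exp 1 - 1)) - fps_X * (fps_exp 1 - 1)"
    by (simp add: algebra_simps)
  also have "\<dots> = - fps_X - fps_X * (fps_exp 1 - 1)" by (simp only: bE)
  also have "\<dots> = - fps_X * fps_exp 1" by (simp add: algebra_simps)
  finally have 2: "(?b + fps_X) * (1 - fps_exp 1) = - fps_X * fps_exp 1" .
  have ne: "(1 - fps_exp (1::real)) \<noteq> 0"
  proof
    assume "1 - fps_exp (1::real) = 0"
    then have "fps_nth (1 - fps_exp (1::real)) 1 = 0" by simp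
    then show False by simp
  qed
  from 1 2 ne show ?thesis by (metis mult_right_cancel)
qed

lemma b_coeff: "(-1)^n * fps_nth (fps_X / (fps_exp (1::real) - 1)) n
   = fps_nth (fps_X / (fps_exp (1::real) - 1)) n + (if n = 1 then 1 else 0)"
proof -
  have "fps_nth (fps_X / (fps_exp (1::real) - 1) oo (fps_const (-1) * fps_X)) n
     = fps_nth (fps_X / (fps_exp 1 - 1) + fps_X) n" by (simp only: refl_b)
  then show ?thesis by (simp add: fps_X_nth)
qed

lemma b0: "fps_nth (fps_X / (fps_exp (1::real) - 1)) 0 = 1"
proof -
  have "fps_nth ((fps_X / (fps_exp (1::real) - 1)) * (fps_exp 1 - 1)) 1 = 1" by (simp only: bE) simp
  then show ?thesis by (simp add: fps_mult_nth_1)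
qed

lemma bernoulli_0: "bernoulli 0 = 1" by (simp add: bernoulli_def b0)
lemma bernoulli_1: "bernoulli 1 = -1/2"
  using b_coeff[of 1] by (simp add: bernoulli_def)
lemma bernoulli_odd: "odd n \<Longrightarrow> n \<noteq> 1 \<Longrightarrow> bernoulli n = 0"
  using b_coeff[of n] by (simp add: bernoulli_def)

definition b2 :: "real fps" where "b2 = fps_X / (fps_exp (1::real) - 1) oo (fps_const 2 * fps_X)"
definition HH :: "real fps" where "HH = b2 * fps_exp 1"

lemma b2_nth: "fps_nth b2 n = 2^n * fps_nth (fps_X / (fps_exp (1::real) - 1)) n"
  by (simp add: b2_def)

lemma refl_b2: "b2 oo (fps_const (-1) * fps_X) = b2 + fps_const 2 * fps_X"
proof (rule fps_ext)
  fix n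
  have "(-1)^n * fps_nth b2 n = 2^n * ((-1)^n * fps_nth (fps_X / (fps_exp (1::real) - 1)) n)"
    by (simp add: b2_nth)
  also have "\<dots> = fps_nth b2 n + (if n = 1 then 2 else 0)"
    by (simp only: b_coeff) (simp add: b2_nth algebra_simps)
  finally show "fps_nth (b2 oo (fps_const (-1) * fps_X)) n = fps_nth (b2 + fps_const 2 * fps_X) n"
    by (simp add: fps_X_nth)
qed

lemma HH_refl: "HH oo (fps_const (-1) * fps_X) = HH"
proof -
  have M0: "fps_nth (fps_const (-1::real) * fps_X) 0 = 0" by simp
  have 1: "HH oo (fps_const (-1) * fps_X) = (b2 + fps_const 2 * fps_X) * fps_exp (-1)"
    unfolding HH_def by (simp add: fps_compose_mult_distrib[OF M0] refl_b2)
  have c: "b2 * (fps_exp 2 - 1) = fps_const 2 * fps_X" unfolding b2_def by (rule compose_lin)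
  have e2: "fps_exp (2::real) = fps_exp 1 * fps_exp 1"
    by (simp add: fps_exp_add_mult[symmetric])
  have "(b2 + fps_const 2 * fps_X) * fps_exp (-1) * fps_exp 1 = b2 + fps_const 2 * fps_X"
    using exp_inv by (simp add: mult.assoc)
  also have "\<dots> = b2 * fps_exp 2" using c by (simp add: algebra_simps)
  also have "\<dots> = HH * fps_exp 1" unfolding HH_def e2 by (simp add: mult.assoc)
  finally have "(b2 + fps_const 2 * fps_X) * fps_exp (-1) * fps_exp 1 = HH * fps_exp 1" .
  moreover have "fps_exp (1::real) \<noteq> 0"
  proof
    assume "fps_exp (1::real) = 0"
    then have "fps_nth (fps_exp (1::real)) 0 = 0" by simp
    then show False by simp
  qed
  ultimately show ?thesis using 1 by (metis mult_right_cancel)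
qed

lemma HH_odd: "odd m \<Longrightarrow> fps_nth HH m = 0"
proof -
  assume "odd m"
  have "fps_nth (HH oo (fps_const (-1) * fps_X)) m = fps_nth HH m" by (simp only: HH_refl)
  then have "(-1)^m * fps_nth HH m = fps_nth HH m" by simp
  with \<open>odd m\<close> show ?thesis by simp
qed

lemma S_eq: "(\<Sum>j=0..m. real (m choose j) * 2^j * bernoulli j) = fact m * fps_nth HH m"
proof -
  have "fps_nth HH m = (\<Sum>j=0..m. 2^j * fps_nth (fps_X / (fps_exp (1::real) - 1)) j / fact (m - j))"
    by (simp add: HH_def fps_mult_nth b2_nth)
  moreover have "real (m choose j) * 2^j * bernoulli j = fact m * (2^j * fps_nth (fps_X / (fps_exp (1::real) - 1)) j / fact (m - j))"
    if "j \<in> {0..m}" for j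
    using that by (simp add: binomial_fact bernoulli_def field_simps)
  ultimately show ?thesis by (simp add: sum_distrib_left)
qed

lemma sum_even_odd: "(\<Sum>j<2*N. f j) = (\<Sum>k<N. f (2*k) + f (2*k+1))" for f :: "nat \<Rightarrow> real"
  by (induction N) (simp_all add: algebra_simps)

theorem mainTheorem20:
  fixes n :: nat
  assumes "n \<ge> 1"
  shows "(fact (2*n))^2 / (fact (2*n - 1) * fact (2*n + 1)) =
    (\<Sum>k=1..n. real ((2*n) choose (2*k)) * 2^(2*k) * bernoulli (2*k) / real (2*n - 2*k + 1))"
proof -
  define f where "f j = real ((2*n+1) choose j) * 2^j * bernoulli j" for j
  have "(\<Sum>j=0..2*n+1. f j) = 0" unfolding f_def by (simp only: S_eq) (simp add: HH_odd)
  moreover have "{0..2*n+1} = {..<2*(n+1)}" by auto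
  ultimately have "(\<Sum>j<2*(n+1). f j) = 0" by metis
  then have "(\<Sum>k<n+1. f (2*k) + f (2*k+1)) = 0" by (simp only: sum_even_odd)
  moreover have "f (2*k+1) = (if k = 0 then - real (2*n+1) else 0)" for k
    by (cases "k = 0") (simp_all add: f_def bernoulli_1[simplified] bernoulli_odd field_simps)
  ultimately have "(\<Sum>k<n+1. f (2*k)) = real (2*n+1)"
    by (simp add: sum.distrib split: if_splits)
  moreover have "(\<Sum>k<n+1. f (2*k)) = f 0 + (\<Sum>k=1..n. f (2*k))"
    by (simp add: lessThan_Suc_atMost sum.atLeast_Suc_atMost atLeast0AtMost[symmetric])
  moreover have "f 0 = 1" by (simp add: f_def bernoulli_0)
  ultimately have S: "(\<Sum>k=1..n. f (2*k)) = real (2*n)" by simp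
  have trm: "real ((2*n) choose (2*k)) * 2^(2*k) * bernoulli (2*k) / real (2*n - 2*k + 1)
      = f (2*k) / real (2*n+1)" if "k \<in> {1..n}" for k
  proof -
    have "(2*n+1 - 2*k) * ((2*n+1) choose (2*k)) = (2*n+1) * ((2*n+1-1) choose (2*k))"
      by (rule binomial_absorb_comp)
    moreover have "2*n+1 - 2*k = 2*n - 2*k + 1" "2*n+1-1 = 2*n" using that by auto
    ultimately have "(2*n - 2*k + 1) * ((2*n+1) choose (2*k)) = (2*n+1) * ((2*n) choose (2*k))"
      by simp
    then have "real (2*n - 2*k + 1) * real ((2*n+1) choose (2*k)) = real (2*n+1) * real ((2*n) choose (2*k))"
      by (metis of_nat_mult)
    moreover have "real (2*n - 2*k + 1) > 0" by simp
    ultimately show ?thesis unfolding f_def by (simp add: field_simps)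
  qed
  have R: "(\<Sum>k=1..n. real ((2*n) choose (2*k)) * 2^(2*k) * bernoulli (2*k) / real (2*n - 2*k + 1))
     = real (2*n) / real (2*n+1)"
  proof -
    have "(\<Sum>k=1..n. real ((2*n) choose (2*k)) * 2^(2*k) * bernoulli (2*k) / real (2*n - 2*k + 1))
        = (\<Sum>k=1..n. f (2*k) / real (2*n+1))" by (rule sum.cong) (simp_all only: trm)
    also have "\<dots> = (\<Sum>k=1..n. f (2*k)) / real (2*n+1)" by (simp only: sum_divide_distrib)
    finally show ?thesis using S by simp
  qed
  have L: "(fact (2*n))^2 / (fact (2*n - 1) * fact (2*n + 1)) = (real (2*n) / real (2*n+1) :: real)"
  proof -
    have a: "fact (2*n) = real (2*n) * fact (2*n-1)"
    proof -
      obtain m where m: "2*n = Suc m" using assms by (cases "2*n") auto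
      then have "2*n - 1 = m" by simp
      then show ?thesis unfolding m by (simp only: fact_Suc of_nat_mult)
    qed
    have b: "fact (2*n+1) = real (2*n+1) * fact (2*n)" by simp
    define A :: real where "A = fact (2*n-1)"
    have A: "A > 0" unfolding A_def by simp
    have "(fact (2*n))^2 / (fact (2*n - 1) * fact (2*n + 1)) = (real (2*n) * A)^2 / (A * (real (2*n+1) * (real (2*n) * A)))"
      unfolding b a A_def by simp
    also have "\<dots> = real (2*n) / real (2*n+1)"
    proof -
      have "real (2*n) > 0" using assms by simp
      then have ne: "A * (real (2*n+1) * (real (2*n) * A)) \<noteq> 0" using A by simp
      have "real (2*n+1) \<noteq> 0" by simp
      then show ?thesis using ne by (simp add: divide_eq_eq eq_divide_eq power2_eq_square)
    qed
    finally show ?thesis .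
  qed
  show ?thesis using L R by simp
qed

end
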